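(* Let $B$ be a simple soluble skew left brace. Then $B$ is an abelian brace and $(B,+)=(B,\cdot)$ is a cyclic group of prime order.
   Context: A skew left brace (brace) is a set $B$ with two group structures $(B,+)$ and $(B,\cdot)$ with $a(b+c)=ab-a+ac$; $\lambda_a(b)=-a+ab$. An ideal is a subset that is a normal subgroup of both groups and $\lambda_b$-invariant for all $b$. $B$ is simple if $B\neq0$ and its only ideals are $0$ and $B$. For ideals $I,J$, $[I,J]$ is the smallest ideal containing $[I,J]_+$, $[I,J]_\cdot$ and all $ij-(i+j)$; $B$ is abelian if $[B,B]=0$ (i.e. $ab=a+b=b+a$ for all $a,b$). $B$ is soluble if there is a chain $B=I_0\supseteq\cdots\supseteq I_n=0$ with each $I_i$ an ideal of the brace $I_{i-1}$ and $I_{i-1}/I_i$ abelian. *)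

theory Defs
  imports "HOL-Algebra.Algebra" "HOL-Computational_Algebra.Primes"
begin

text \<open>A skew left brace is given by two group structures A (the additive group (B,+),
  written with the HOL-Algebra multiplicative record notation) and M (the multiplicative
  group (B,.)) on the same carrier, satisfying a(b+c) = ab - a + ac.\<close>

definition skew_brace :: "('a, 'b) monoid_scheme \<Rightarrow> ('a, 'c) monoid_scheme \<Rightarrow> bool" where
  "skew_brace A M \<longleftrightarrow> group A \<and> group M \<and> carrier A = carrier M \<and>
     (\<forall>a\<in>carrier A. \<forall>b\<in>carrier A. \<forall>c\<in>carrier A.
        a \<otimes>\<^bsub>M\<^esub> (b \<otimes>\<^bsub>A\<^esub> c)
          = ((a \<otimes>\<^bsub>M\<^esub> b) \<otimes>\<^bsub>A\<^esub> inv\<^bsub>A\<^esub> a) \<otimes>\<^bsub>A\<^esub> (a \<otimes>\<^bsub>M\<^esub> c))"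

definition brace_lambda :: "('a, 'b) monoid_scheme \<Rightarrow> ('a, 'c) monoid_scheme \<Rightarrow> 'a \<Rightarrow> 'a \<Rightarrow> 'a" where
  "brace_lambda A M a b = inv\<^bsub>A\<^esub> a \<otimes>\<^bsub>A\<^esub> (a \<otimes>\<^bsub>M\<^esub> b)"

definition brace_ideal :: "('a, 'b) monoid_scheme \<Rightarrow> ('a, 'c) monoid_scheme \<Rightarrow> 'a set \<Rightarrow> bool" where
  "brace_ideal A M I \<longleftrightarrow> normal I A \<and> normal I M \<and>
     (\<forall>b\<in>carrier A. \<forall>x\<in>I. brace_lambda A M b x \<in> I)"

definition brace_trivial :: "('a, 'b) monoid_scheme \<Rightarrow> bool" where
  "brace_trivial A \<longleftrightarrow> carrier A = {\<one>\<^bsub>A\<^esub>}"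

definition simple_brace :: "('a, 'b) monoid_scheme \<Rightarrow> ('a, 'c) monoid_scheme \<Rightarrow> bool" where
  "simple_brace A M \<longleftrightarrow> skew_brace A M \<and> \<not> brace_trivial A \<and>
     (\<forall>I. brace_ideal A M I \<longrightarrow> I = {\<one>\<^bsub>A\<^esub>} \<or> I = carrier A)"

definition abelian_brace :: "('a, 'b) monoid_scheme \<Rightarrow> ('a, 'c) monoid_scheme \<Rightarrow> bool" where
  "abelian_brace A M \<longleftrightarrow> (\<forall>a\<in>carrier A. \<forall>b\<in>carrier A.
     a \<otimes>\<^bsub>M\<^esub> b = a \<otimes>\<^bsub>A\<^esub> b \<and> a \<otimes>\<^bsub>A\<^esub> b = b \<otimes>\<^bsub>A\<^esub> a)"

definition soluble_brace :: "('a, 'b) monoid_scheme \<Rightarrow> ('a, 'c) monoid_scheme \<Rightarrow> bool" where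
  "soluble_brace A M \<longleftrightarrow> skew_brace A M \<and>
     (\<exists>(I :: nat \<Rightarrow> 'a set) n. I 0 = carrier A \<and> I n = {\<one>\<^bsub>A\<^esub>} \<and>
        (\<forall>i\<in>{1..n}.
           I i \<subseteq> I (i - 1) \<and>
           brace_ideal (A\<lparr>carrier := I (i - 1)\<rparr>) (M\<lparr>carrier := I (i - 1)\<rparr>) (I i) \<and>
           abelian_brace ((A\<lparr>carrier := I (i - 1)\<rparr>) Mod (I i))
                         ((M\<lparr>carrier := I (i - 1)\<rparr>) Mod (I i))))"

end

theory Submission imports Defs begin

lemma grp_simple_prime:
  fixes G (structure)
  assumes G: "comm_group G" and nt: "carrier G \<noteq> {\<one>\<^bsub>G\<^esub>}"
    and sub: "\<And>H. subgroup H G \<Longrightarrow> H = {\<one>\<^bsub>G\<^esub>} \<or> H = carrier G"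
  shows "cyclic_group G \<and> Factorial_Ring.prime (card (carrier G))"
proof -
  interpret comm_group G by (rule G)
  obtain a where a: "a \<in> carrier G" "a \<noteq> \<one>" using nt one_closed by blast
  have gen: "generate G {a} = carrier G"
    if a: "a \<in> carrier G" "a \<noteq> \<one>" for a
  proof -
    have "a \<in> generate G {a}" by (simp add: generate.incl)
    then show ?thesis using sub[OF generate_is_subgroup[of "{a}"]] a by auto
  qed
  have sgG: "subgroup_generated G {a} = G"
    using gen[OF a] a unfolding subgroup_generated_def by simp
  have cyc: "cyclic_group G" unfolding cyclic_group_def using sgG a by blast
  have ordne: "ord a \<noteq> 0"
  proof (cases "a [^] (2::nat) = \<one>")
    case True then show ?thesis using ord_eq_0[OF a(1)] by force
  next
    case False
    have x: "a [^] (2::nat) \<in> carrier G" using a by simp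
    have "a \<in> generate G {a [^] (2::nat)}" using gen[OF x False] a by simp
    then obtain k :: int where k: "a = (a [^] (2::nat)) [^] k" using generate_pow[OF x] by auto
    have "a [^] (2::nat) = a [^] (2::int)" by (simp add: int_pow_int[symmetric])
    then have "a = a [^] (2*k)" using k a by (simp add: int_pow_pow)
    then have "a [^] (2*k - 1) = \<one>" using a
      by (metis int_pow_1 int_pow_diff r_inv)
    then have "int (ord a) dvd (2*k - 1)" using int_pow_eq_id[OF a(1)] by simp
    moreover have "\<not> (0::int) dvd (2*k - 1)" by (simp, presburger)
    ultimately show ?thesis by (metis of_nat_0)
  qed
  have fin: "finite (carrier G)" using finite_cyclic_subgroup_order[OF a(1)] ordne sgG by simp
  have cardn: "card (carrier G) = ord a" using generate_pow_card[OF a(1)] gen[OF a] by simp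
  have "1 < ord a"
  proof -
    have "card (carrier G) \<noteq> 1" using nt one_closed card_1_singletonE by (metis singletonD)
    moreover have "ord a \<noteq> 0" by fact
    ultimately show ?thesis using cardn by linarith
  qed
  moreover have "d = 1 \<or> d = ord a" if d: "d dvd ord a" for d
  proof -
    have y: "a [^] d \<in> carrier G" using a by simp
    have od: "ord (a [^] d) = ord a div d"
      using ord_pow_gen[OF a(1), of d] d ordne by (auto simp: gcd_nat.absorb1)
    have cy: "card (generate G {a [^] d}) = ord a div d" using generate_pow_card[OF y] od by simp
    from sub[OF generate_is_subgroup[of "{a [^] d}"]] y
    have "generate G {a [^] d} = {\<one>} \<or> generate G {a [^] d} = carrier G" by simp
    then have "ord a div d = 1 \<or> ord a div d = ord a" using cy cardn by auto
    moreover obtain q where q: "ord a = d * q" using d by blast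
    moreover have "d \<noteq> 0" using q ordne by auto
    ultimately show ?thesis using ordne by auto
  qed
  ultimately have "Factorial_Ring.prime (ord a)" unfolding prime_nat_iff by blast
  with cyc cardn show ?thesis by simp
qed
lemma brace_one:
  assumes "skew_brace A M"
  shows "\<one>\<^bsub>M\<^esub> = \<one>\<^bsub>A\<^esub>"
proof -
  interpret A: group A using assms unfolding skew_brace_def by blast
  interpret M: group M using assms unfolding skew_brace_def by blast
  have c: "carrier A = carrier M" using assms unfolding skew_brace_def by blast
  have br: "\<And>a b c. a \<in> carrier A \<Longrightarrow> b \<in> carrier A \<Longrightarrow> c \<in> carrier A \<Longrightarrow>
     a \<otimes>\<^bsub>M\<^esub> (b \<otimes>\<^bsub>A\<^esub> c)
          = ((a \<otimes>\<^bsub>M\<^esub> b) \<otimes>\<^bsub>A\<^esub> inv\<^bsub>A\<^esub> a) \<otimes>\<^bsub>A\<^esub> (a \<otimes>\<^bsub>M\<^esub> c)"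
    using assms unfolding skew_brace_def by blast
  define a where "a = \<one>\<^bsub>M\<^esub>"
  have a: "a \<in> carrier A" using c a_def by simp
  define x where "x = a \<otimes>\<^bsub>M\<^esub> \<one>\<^bsub>A\<^esub>"
  have x: "x \<in> carrier A" using a c x_def by (metis A.one_closed M.m_closed)
  have "x = (x \<otimes>\<^bsub>A\<^esub> inv\<^bsub>A\<^esub> a) \<otimes>\<^bsub>A\<^esub> x"
    using br[OF a A.one_closed A.one_closed] x_def by simp
  then have "x \<otimes>\<^bsub>A\<^esub> \<one>\<^bsub>A\<^esub> = x \<otimes>\<^bsub>A\<^esub> (inv\<^bsub>A\<^esub> a \<otimes>\<^bsub>A\<^esub> x)"
    using x a by (simp add: A.m_assoc)
  then have "\<one>\<^bsub>A\<^esub> = inv\<^bsub>A\<^esub> a \<otimes>\<^bsub>A\<^esub> x"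
    using x a A.l_cancel by (metis A.inv_closed A.m_closed A.one_closed)
  then have "x = a" using x a by (metis A.inv_equality A.inv_inv A.inv_closed)
  moreover have "x = \<one>\<^bsub>A\<^esub>" using x_def a_def c by (metis A.one_closed M.l_one)
  ultimately show ?thesis using a_def by simp
qed

theorem corollary4p5:
  fixes A :: "'a monoid" and M :: "'a monoid"
  assumes "simple_brace A M" and "soluble_brace A M"
  shows "abelian_brace A M \<and> (\<forall>a\<in>carrier A. \<forall>b\<in>carrier A. a \<otimes>\<^bsub>M\<^esub> b = a \<otimes>\<^bsub>A\<^esub> b)
         \<and> cyclic_group A \<and> Factorial_Ring.prime (card (carrier A))"
proof -
  have sk: "skew_brace A M" and nt: "\<not> brace_trivial A"
    and simp: "\<And>I. brace_ideal A M I \<Longrightarrow> I = {\<one>\<^bsub>A\<^esub>} \<or> I = carrier A"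
    using assms(1) unfolding simple_brace_def by blast+
  interpret A: group A using sk unfolding skew_brace_def by blast
  interpret M: group M using sk unfolding skew_brace_def by blast
  have c: "carrier M = carrier A" using sk unfolding skew_brace_def by simp
  have one: "\<one>\<^bsub>M\<^esub> = \<one>\<^bsub>A\<^esub>" by (rule brace_one[OF sk])
  have ntc: "carrier A \<noteq> {\<one>\<^bsub>A\<^esub>}" using nt unfolding brace_trivial_def .
  obtain I :: "nat \<Rightarrow> 'a set" and n where I0: "I 0 = carrier A" and In: "I n = {\<one>\<^bsub>A\<^esub>}"
    and step: "\<And>i. i \<in> {1..n} \<Longrightarrow> I i \<subseteq> I (i - 1) \<and>
           brace_ideal (A\<lparr>carrier := I (i - 1)\<rparr>) (M\<lparr>carrier := I (i - 1)\<rparr>) (I i) \<and>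
           abelian_brace ((A\<lparr>carrier := I (i - 1)\<rparr>) Mod (I i))
                         ((M\<lparr>carrier := I (i - 1)\<rparr>) Mod (I i))"
    using assms(2) unfolding soluble_brace_def by blast
  define i where "i = (LEAST i. I i \<noteq> carrier A)"
  have ex: "I n \<noteq> carrier A" using In ntc by simp
  have Ii: "I i \<noteq> carrier A" using LeastI[of "\<lambda>i. I i \<noteq> carrier A", OF ex] i_def by simp
  have "i \<le> n" using Least_le[of "\<lambda>i. I i \<noteq> carrier A", OF ex] i_def by simp
  moreover have "i \<noteq> 0" using Ii I0 by auto
  ultimately have i1: "i \<in> {1..n}" by simp
  have Ip: "I (i - 1) = carrier A"
    using not_less_Least[of "i - 1" "\<lambda>i. I i \<noteq> carrier A"] i_def \<open>i \<noteq> 0\<close> by fastforce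
  have eA: "A\<lparr>carrier := I (i - 1)\<rparr> = A" using Ip by simp
  have eM: "M\<lparr>carrier := I (i - 1)\<rparr> = M" using Ip c by simp
  have "brace_ideal A M (I i)" using step[OF i1] eA eM by simp
  then have I1: "I i = {\<one>\<^bsub>A\<^esub>}" using simp Ii by blast
  have ab: "abelian_brace (A Mod {\<one>\<^bsub>A\<^esub>}) (M Mod {\<one>\<^bsub>A\<^esub>})"
    using step[OF i1] eA eM I1 by simp
  have rcA: "{\<one>\<^bsub>A\<^esub>} #>\<^bsub>A\<^esub> a = {a}" if "a \<in> carrier A" for a
    using that unfolding r_coset_def by simp
  have rcM: "{\<one>\<^bsub>A\<^esub>} #>\<^bsub>A\<^esub> a = {a}" if "a \<in> carrier A" for a
    using that unfolding r_coset_def by simp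
  have key: "a \<otimes>\<^bsub>M\<^esub> b = a \<otimes>\<^bsub>A\<^esub> b \<and> a \<otimes>\<^bsub>A\<^esub> b = b \<otimes>\<^bsub>A\<^esub> a"
    if a: "a \<in> carrier A" and b: "b \<in> carrier A" for a b
  proof -
    have ca: "{a} \<in> carrier (A Mod {\<one>\<^bsub>A\<^esub>})" using rcA[OF a] a
      unfolding FactGroup_def RCOSETS_def by force
    have cb: "{b} \<in> carrier (A Mod {\<one>\<^bsub>A\<^esub>})" using rcA[OF b] b
      unfolding FactGroup_def RCOSETS_def by force
    from ab ca cb have "{a} \<otimes>\<^bsub>M Mod {\<one>\<^bsub>A\<^esub>}\<^esub> {b} = {a} \<otimes>\<^bsub>A Mod {\<one>\<^bsub>A\<^esub>}\<^esub> {b}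
       \<and> {a} \<otimes>\<^bsub>A Mod {\<one>\<^bsub>A\<^esub>}\<^esub> {b} = {b} \<otimes>\<^bsub>A Mod {\<one>\<^bsub>A\<^esub>}\<^esub> {a}"
      unfolding abelian_brace_def by blast
    then show ?thesis unfolding FactGroup_def set_mult_def by simp
  qed
  have abel: "abelian_brace A M" unfolding abelian_brace_def using key by blast
  have cg: "comm_group A"
    by (rule A.group_comm_groupI) (use key in auto)
  have invM: "inv\<^bsub>M\<^esub> a = inv\<^bsub>A\<^esub> a" if a: "a \<in> carrier A" for a
  proof -
    have "a \<otimes>\<^bsub>M\<^esub> inv\<^bsub>A\<^esub> a = \<one>\<^bsub>M\<^esub>" using key[OF a A.inv_closed[OF a]] a one by simp
    then show ?thesis using a c by (metis A.inv_closed M.inv_equality M.inv_inv M.inv_closed M.r_inv M.l_cancel M.one_closed)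
  qed
  have "\<And>H. subgroup H A \<Longrightarrow> H = {\<one>\<^bsub>A\<^esub>} \<or> H = carrier A"
  proof -
    fix H assume H: "subgroup H A"
    have nA: "normal H A" using comm_group.subgroup_imp_normal[OF cg H] .
    have HA: "H \<subseteq> carrier A" using H subgroup.subset by blast
    have sM: "subgroup H M"
    proof
      show "H \<subseteq> carrier M" using HA c by simp
      show "x \<otimes>\<^bsub>M\<^esub> y \<in> H" if "x \<in> H" "y \<in> H" for x y
        proof -
        have "x \<in> carrier A" "y \<in> carrier A" using that HA by auto
        then have "x \<otimes>\<^bsub>M\<^esub> y = x \<otimes>\<^bsub>A\<^esub> y" using key by blast
        then show ?thesis using subgroup.m_closed[OF H that] by simp
      qed
      show "\<one>\<^bsub>M\<^esub> \<in> H" using one subgroup.one_closed[OF H] by simp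
      show "inv\<^bsub>M\<^esub> x \<in> H" if "x \<in> H" for x
        proof -
        have "x \<in> carrier A" using that HA by auto
        then show ?thesis using invM subgroup.m_inv_closed[OF H that] by simp
      qed
    qed
    have nM: "normal H M"
      unfolding M.normal_inv_iff
    proof (intro conjI ballI sM)
      fix x h assume x: "x \<in> carrier M" and h: "h \<in> H"
      have "x \<otimes>\<^bsub>M\<^esub> h \<otimes>\<^bsub>M\<^esub> inv\<^bsub>M\<^esub> x = x \<otimes>\<^bsub>A\<^esub> h \<otimes>\<^bsub>A\<^esub> inv\<^bsub>A\<^esub> x"
        using x h HA c key invM by (metis A.inv_closed A.m_closed subsetD)
      then show "x \<otimes>\<^bsub>M\<^esub> h \<otimes>\<^bsub>M\<^esub> inv\<^bsub>M\<^esub> x \<in> H"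
        using nA x h c unfolding A.normal_inv_iff by simp
    qed
    have "brace_ideal A M H"
      unfolding brace_ideal_def brace_lambda_def
    proof (intro conjI ballI nA nM)
      fix b x assume b: "b \<in> carrier A" and x: "x \<in> H"
      have xA: "x \<in> carrier A" using x HA by blast
      have "inv\<^bsub>A\<^esub> b \<otimes>\<^bsub>A\<^esub> (b \<otimes>\<^bsub>M\<^esub> x) = x"
        proof -
        have eq: "b \<otimes>\<^bsub>M\<^esub> x = b \<otimes>\<^bsub>A\<^esub> x" using key[OF b xA] by blast
        show ?thesis using b xA by (simp add: eq A.m_assoc[symmetric])
      qed
      then show "inv\<^bsub>A\<^esub> b \<otimes>\<^bsub>A\<^esub> (b \<otimes>\<^bsub>M\<^esub> x) \<in> H" using x by simp
    qed
    then show "H = {\<one>\<^bsub>A\<^esub>} \<or> H = carrier A" using simp by blast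
  qed
  then have "cyclic_group A \<and> Factorial_Ring.prime (card (carrier A))"
    using grp_simple_prime[OF cg ntc] by blast
  then show ?thesis using abel key by blast
qed

end
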